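(* Let $u,v$ be positive integers, let $\mu=(u^v)$ be the $u\times v$ rectangular partition of $n=uv$, and let $s^\mu$ be the number of standard Young tableaux of shape $\mu$. Then $$\left(\frac{n}{u+v}\right)^n\left(\frac{2}{e}\right)^n<s^\mu,$$ where $e=2.71828\ldots$. In particular, if $\alpha\le\frac{n}{u+v}\cdot\frac2e$ then $\alpha^n\le s^\mu$.
   Context: $s^\mu$ equals the dimension of the irreducible representation of $S_n$ over a field of characteristic $0$ indexed by $\mu$, and is given by the hook formula $s^\mu=n!/\prod_{x\in\mu}h_x$, where $h_x$ is the hook number of the box $x$. *)

theory Defs
  imports Complex_Main
begin

text \<open>Young diagram of the rectangular partition (u^v): v rows, each of length u.
  Cells are (i,j) with row index i < v and column index j < u.\<close>
definition rect_cells :: "nat \<Rightarrow> nat \<Rightarrow> (nat \<times> nat) set" where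
  "rect_cells u v = {(i, j). i < v \<and> j < u}"

definition rect_syt :: "nat \<Rightarrow> nat \<Rightarrow> (nat \<times> nat \<Rightarrow> nat) set" where
  "rect_syt u v = {T. bij_betw T (rect_cells u v) {1..u * v}
      \<and> (\<forall>c. c \<notin> rect_cells u v \<longrightarrow> T c = 0)
      \<and> (\<forall>i j. i < v \<and> j + 1 < u \<longrightarrow> T (i, j) < T (i, j + 1))
      \<and> (\<forall>i j. i + 1 < v \<and> j < u \<longrightarrow> T (i, j) < T (i + 1, j))}"

definition num_syt_rect :: "nat \<Rightarrow> nat \<Rightarrow> nat" where
  "num_syt_rect u v = card (rect_syt u v)"

end

theory Submission
  imports Defs "HOL-Library.FuncSet"
begin

definition wt :: "nat \<Rightarrow> (nat \<Rightarrow> real) \<Rightarrow> nat \<Rightarrow> real" where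
  "wt k x i = (\<Prod>j\<in>{..<k}-{i}. (x i - x j - 1) / (x i - x j))"

definition Phi :: "nat \<Rightarrow> (nat \<Rightarrow> real) \<Rightarrow> real \<Rightarrow> real" where
  "Phi k x z = (\<Prod>j<k. (z - x j - 1) / (z - x j))"

lemma wt_Suc: "i < k \<Longrightarrow> wt (Suc k) x i = wt k x i * ((x i - x k - 1) / (x i - x k))"
proof -
  assume "i < k"
  then have "{..<Suc k} - {i} = insert k ({..<k} - {i})" by auto
  then show ?thesis unfolding wt_def by (simp add: mult.commute)
qed

lemma wt_last: "wt (Suc k) x k = Phi k x (x k)"
proof -
  have "{..<Suc k} - {k} = {..<k}" by auto
  then show ?thesis unfolding wt_def Phi_def by simp
qed

lemma Phi_Suc: "Phi (Suc k) x z = Phi k x z * ((z - x k - 1) / (z - x k))"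
  unfolding Phi_def by simp

lemma pt: fixes w a y z :: real
  shows "z - a \<noteq> 0 \<Longrightarrow> a - y \<noteq> 0 \<Longrightarrow> z - y \<noteq> 0 \<Longrightarrow> -(w/(z-a)) + w/(z-a)*(1/(z-y)) = -(w*(a-y-1)/((a-y)*(z-a))) - w/(a-y)*(1/(z-y))"
  apply (simp add: divide_simps)
  apply (simp add: algebra_simps)
  done

lemma Phi_pf:
  "inj_on x {..<k} \<Longrightarrow> z \<notin> x ` {..<k} \<Longrightarrow> Phi k x z = 1 - (\<Sum>i<k. wt k x i / (z - x i))"
proof (induction k arbitrary: z)
  case 0
  then show ?case by (simp add: Phi_def)
next
  case (Suc k)
  define y where "y = x k"
  have inj: "inj_on x {..<k}" using Suc.prems(1) by (auto simp: inj_on_def)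
  have yn: "y \<notin> x ` {..<k}" using Suc.prems(1) unfolding y_def inj_on_def by force
  have zn: "z \<notin> x ` {..<k}" using Suc.prems(2) by auto
  have zy: "z \<noteq> y" using Suc.prems(2) unfolding y_def by auto
  have ne1: "\<And>i. i < k \<Longrightarrow> z - x i \<noteq> 0" using zn by force
  have ne2: "\<And>i. i < k \<Longrightarrow> x i - y \<noteq> 0" using yn by force
  have IHz: "Phi k x z = 1 - (\<Sum>i<k. wt k x i / (z - x i))" using Suc.IH[OF inj zn] .
  have IHy: "Phi k x y = 1 - (\<Sum>i<k. wt k x i / (y - x i))" using Suc.IH[OF inj yn] .
  define t where "t = 1 / (z - y)"
  define f where "f i = wt k x i / (z - x i)" for i
  have "Phi (Suc k) x z = (1 - (\<Sum>i<k. f i)) * (1 - t)"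
    using zy by (simp add: Phi_Suc IHz y_def[symmetric] f_def t_def field_simps)
  also have "\<dots> = 1 - t + (\<Sum>i<k. (- f i + f i * t))"
    by (simp add: sum.distrib sum_distrib_left sum_distrib_right sum_negf sum_subtractf algebra_simps)
  also have "\<dots> = 1 - t + (\<Sum>i<k. (- (wt k x i * (x i - y - 1) / ((x i - y) * (z - x i))) - wt k x i / (x i - y) * t))"
  proof -
    have "\<And>i. i < k \<Longrightarrow> (- f i + f i * t) =
        (- (wt k x i * (x i - y - 1) / ((x i - y) * (z - x i))) - wt k x i / (x i - y) * t)"
    proof -
      fix i assume "i < k"
      note a = ne1[OF this] ne2[OF this]
      have zy': "z - y \<noteq> 0" using zy by simp
      show "?thesis i" using pt[OF a(1) a(2) zy'] unfolding f_def t_def by simp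
    qed
    then show ?thesis by (intro arg_cong2[where f="(+)"] refl sum.cong) auto
  qed
  also have "\<dots> = 1 - (\<Sum>i<k. wt k x i * ((x i - y - 1) / (x i - y)) / (z - x i)) - Phi k x y * t"
  proof -
    have P: "Phi k x y = 1 + (\<Sum>i<k. wt k x i / (x i - y))"
      unfolding IHy by (simp add: sum_negf[symmetric] minus_divide_right)
    have G: "(\<Sum>i<k. wt k x i * ((x i - y - 1) / (x i - y)) / (z - x i)) = (\<Sum>i<k. (wt k x i * (x i - y - 1) / ((x i - y) * (z - x i))))"
      by (intro sum.cong) auto
    have H: "(\<Sum>i<k. (- (wt k x i * (x i - y - 1) / ((x i - y) * (z - x i))) - wt k x i / (x i - y) * t))
       = - (\<Sum>i<k. (wt k x i * (x i - y - 1) / ((x i - y) * (z - x i)))) - (\<Sum>i<k. wt k x i / (x i - y)) * t"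
      by (simp add: sum_subtractf sum_negf sum_distrib_right)
    show ?thesis unfolding G H P by (simp add: algebra_simps)
  qed
  also have "\<dots> = 1 - (\<Sum>i<k. wt k x i * ((x i - y - 1) / (x i - y)) / (z - x i)) - Phi k x y / (z - y)"
    by (simp add: t_def)
  also have "\<dots> = 1 - (\<Sum>i<Suc k. wt (Suc k) x i / (z - x i))"
    by (simp add: wt_Suc wt_last y_def)
  finally show ?case .
qed

lemma WT:
  "inj_on x {..<k} \<Longrightarrow> (\<Sum>i<k. wt k x i) = real k \<and>
     (\<Sum>i<k. x i * wt k x i) = (\<Sum>i<k. x i) - real k * (real k - 1) / 2"
proof (induction k)
  case 0
  then show ?case by simp
next
  case (Suc k)
  define y where "y = x k"
  have inj: "inj_on x {..<k}" using Suc.prems(1) by (auto simp: inj_on_def)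
  have yn: "y \<notin> x ` {..<k}" using Suc.prems(1) unfolding y_def inj_on_def by force
  have ne2: "\<And>i. i < k \<Longrightarrow> x i - y \<noteq> 0" using yn by force
  note IH = Suc.IH[OF inj]
  have P: "Phi k x y = 1 + (\<Sum>i<k. wt k x i / (x i - y))"
    unfolding Phi_pf[OF inj yn] by (simp add: sum_negf[symmetric] minus_divide_right)
  have A: "(\<Sum>i<Suc k. wt (Suc k) x i) = (\<Sum>i<k. wt k x i * ((x i - y - 1) / (x i - y))) + Phi k x y"
    by (simp add: wt_Suc wt_last y_def)
  have A2: "(\<Sum>i<k. wt k x i * ((x i - y - 1) / (x i - y))) = (\<Sum>i<k. wt k x i) - (\<Sum>i<k. wt k x i / (x i - y))"
  proof -
    have "\<And>i. i < k \<Longrightarrow> wt k x i * ((x i - y - 1) / (x i - y)) = wt k x i - wt k x i / (x i - y)"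
      using ne2 by (simp add: field_simps)
    then show ?thesis by (simp add: sum_subtractf[symmetric])
  qed
  have B: "(\<Sum>i<Suc k. x i * wt (Suc k) x i) = (\<Sum>i<k. x i * (wt k x i * ((x i - y - 1) / (x i - y)))) + y * Phi k x y"
    by (simp add: wt_Suc wt_last y_def)
  have B2: "(\<Sum>i<k. x i * (wt k x i * ((x i - y - 1) / (x i - y)))) = (\<Sum>i<k. x i * wt k x i) - (\<Sum>i<k. wt k x i) - y * (\<Sum>i<k. wt k x i / (x i - y))"
  proof -
    have "\<And>i. i < k \<Longrightarrow> x i * (wt k x i * ((x i - y - 1) / (x i - y))) = x i * wt k x i - wt k x i - y * (wt k x i / (x i - y))"
      using ne2 by (simp add: field_simps)
    then show ?thesis by (simp add: sum_subtractf[symmetric] sum_distrib_left)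
  qed
  show ?case
    using IH unfolding A A2 B B2 P by (simp add: y_def algebra_simps) (simp add: field_simps)
qed

definition Dv :: "nat \<Rightarrow> (nat \<Rightarrow> real) \<Rightarrow> real" where
  "Dv v x = (\<Prod>i<v. \<Prod>j<i. (x j - x i))"

lemma Dv_cong: "(\<And>i. i < v \<Longrightarrow> x i = y i) \<Longrightarrow> Dv v x = Dv v y"
  unfolding Dv_def by (intro prod.cong refl) auto

lemma Dv_Suc: "Dv (Suc v) x = Dv v x * (\<Prod>j<v. (x j - x v))"
  unfolding Dv_def by simp

lemma D_upd: "i0 < v \<Longrightarrow> Dv v (x(i0 := x i0 - 1)) * (\<Prod>j\<in>{..<v}-{i0}. (x i0 - x j))
   = Dv v x * (\<Prod>j\<in>{..<v}-{i0}. (x i0 - 1 - x j))"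
proof (induction v)
  case 0
  then show ?case by simp
next
  case (Suc v)
  define x' where "x' = x(i0 := x i0 - 1)"
  show ?case
  proof (cases "i0 = v")
    case True
    have e: "{..<Suc v} - {i0} = {..<v}" using True by auto
    have d: "Dv v x' = Dv v x" by (rule Dv_cong) (simp add: x'_def True)
    have p1: "(\<Prod>j<v. (x' j - x' v)) = (\<Prod>j<v. (x j - x v + 1))"
      by (intro prod.cong) (auto simp: x'_def True)
    have p2: "(\<Prod>j<v. (x j - x v + 1)) * (\<Prod>j<v. (x v - x j)) = (\<Prod>j<v. (x j - x v)) * (\<Prod>j<v. (x v - 1 - x j))"
      unfolding prod.distrib[symmetric] by (intro prod.cong) (auto simp: algebra_simps)
    show ?thesis unfolding x'_def[symmetric] e Dv_Suc d p1 using p2 True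
      by (simp add: mult.assoc)
  next
    case False
    then have i0: "i0 < v" using Suc.prems by simp
    have e: "{..<Suc v} - {i0} = insert v ({..<v} - {i0})" using False by auto
    have IH: "Dv v x' * (\<Prod>j\<in>{..<v}-{i0}. (x i0 - x j)) = Dv v x * (\<Prod>j\<in>{..<v}-{i0}. (x i0 - 1 - x j))"
      using Suc.IH[OF i0] unfolding x'_def .
    have r1: "(\<Prod>j<v. (x' j - x' v)) = (x i0 - 1 - x v) * (\<Prod>j\<in>{..<v}-{i0}. (x j - x v))"
    proof -
      have "(\<Prod>j<v. (x' j - x' v)) = (x' i0 - x' v) * (\<Prod>j\<in>{..<v}-{i0}. (x' j - x' v))"
        using i0 by (simp add: prod.remove)
      also have "(\<Prod>j\<in>{..<v}-{i0}. (x' j - x' v)) = (\<Prod>j\<in>{..<v}-{i0}. (x j - x v))"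
        using i0 by (intro prod.cong) (auto simp: x'_def)
      finally show ?thesis using i0 by (simp add: x'_def)
    qed
    have r2: "(\<Prod>j<v. (x j - x v)) = (x i0 - x v) * (\<Prod>j\<in>{..<v}-{i0}. (x j - x v))"
      using i0 by (simp add: prod.remove)
    have fin: "finite ({..<v} - {i0})" by simp
    have nin: "v \<notin> {..<v} - {i0}" by simp
    define Q where "Q = (\<Prod>j\<in>{..<v}-{i0}. (x j - x v))"
    define P where "P = (\<Prod>j\<in>{..<v}-{i0}. (x i0 - x j))"
    define R where "R = (\<Prod>j\<in>{..<v}-{i0}. (x i0 - 1 - x j))"
    have IH': "Dv v x' * P = Dv v x * R" using IH unfolding P_def R_def .
    have "Dv v x' * ((x i0 - 1 - x v) * Q) * ((x i0 - x v) * P) = (Dv v x' * P) * ((x i0 - 1 - x v) * Q * (x i0 - x v))"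
      by (simp only: ac_simps)
    also have "\<dots> = Dv v x * ((x i0 - x v) * Q) * ((x i0 - 1 - x v) * R)"
      unfolding IH' by (simp only: ac_simps)
    finally have fin2: "Dv v x' * ((x i0 - 1 - x v) * Q) * ((x i0 - x v) * P) = Dv v x * ((x i0 - x v) * Q) * ((x i0 - 1 - x v) * R)" .
    show ?thesis unfolding x'_def[symmetric] e prod.insert[OF fin nin] Dv_Suc r1 r2
      using fin2 unfolding P_def Q_def R_def by simp
  qed
qed

definition cellsv :: "nat \<Rightarrow> (nat \<Rightarrow> nat) \<Rightarrow> (nat \<times> nat) set" where
  "cellsv v c = {(i, j). i < v \<and> j < c i}"
definition sizev :: "nat \<Rightarrow> (nat \<Rightarrow> nat) \<Rightarrow> nat" where
  "sizev v c = (\<Sum>i<v. c i)"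
definition partv :: "nat \<Rightarrow> (nat \<Rightarrow> nat) \<Rightarrow> bool" where
  "partv v c = (\<forall>i. Suc i < v \<longrightarrow> c (Suc i) \<le> c i)"
definition sytv :: "nat \<Rightarrow> (nat \<Rightarrow> nat) \<Rightarrow> (nat \<times> nat \<Rightarrow> nat) set" where
  "sytv v c = {T. bij_betw T (cellsv v c) {1..sizev v c}
      \<and> (\<forall>x. x \<notin> cellsv v c \<longrightarrow> T x = 0)
      \<and> (\<forall>i j. i < v \<and> j + 1 < c i \<longrightarrow> T (i, j) < T (i, j + 1))
      \<and> (\<forall>i j. i + 1 < v \<and> j < c (i + 1) \<longrightarrow> T (i, j) < T (i + 1, j))}"

lemma finite_cellsv: "finite (cellsv v c)"
proof -
  have "cellsv v c \<subseteq> {..<v} \<times> {..<sizev v c}"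
  proof
    fix p assume "p \<in> cellsv v c"
    then obtain i j where p: "p = (i, j)" "i < v" "j < c i" unfolding cellsv_def by auto
    have "c i \<le> sizev v c" unfolding sizev_def using p(2) by (intro member_le_sum) auto
    then show "p \<in> {..<v} \<times> {..<sizev v c}" using p by auto
  qed
  then show ?thesis by (rule finite_subset) auto
qed

lemma finite_sytv: "finite (sytv v c)"
proof -
  let ?C = "cellsv v c" and ?N = "sizev v c"
  have "sytv v c \<subseteq> (\<lambda>f x. if x \<in> ?C then f x else 0) ` (PiE ?C (\<lambda>_. {1..?N}))"
  proof
    fix T assume T: "T \<in> sytv v c"
    then have b: "bij_betw T ?C {1..?N}" and z: "\<forall>x. x \<notin> ?C \<longrightarrow> T x = 0" unfolding sytv_def by auto
    have "restrict T ?C \<in> PiE ?C (\<lambda>_. {1..?N})" using bij_betw_apply[OF b] by auto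
    moreover have "T = (\<lambda>x. if x \<in> ?C then restrict T ?C x else 0)" using z by auto
    ultimately show "T \<in> (\<lambda>f x. if x \<in> ?C then f x else 0) ` (PiE ?C (\<lambda>_. {1..?N}))" by blast
  qed
  then show ?thesis by (rule finite_subset) (intro finite_imageI finite_PiE finite_cellsv; simp)
qed

lemma part_mono: "partv v c \<Longrightarrow> j \<le> i \<Longrightarrow> i < v \<Longrightarrow> c i \<le> c j"
proof (induction i)
  case 0 then show ?case by simp
next
  case (Suc i)
  show ?case
  proof (cases "j = Suc i")
    case True then show ?thesis by simp
  next
    case False
    then have "c i \<le> c j" using Suc by auto
    moreover have "c (Suc i) \<le> c i" using Suc.prems unfolding partv_def by auto
    ultimately show ?thesis by simp
  qed
qed

definition extv :: "nat \<Rightarrow> (nat \<Rightarrow> nat) \<Rightarrow> nat \<Rightarrow> (nat \<times> nat \<Rightarrow> nat) \<Rightarrow> (nat \<times> nat \<Rightarrow> nat)" where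
  "extv v c i T = T((i, c i - 1) := sizev v c)"

definition validv :: "nat \<Rightarrow> (nat \<Rightarrow> nat) \<Rightarrow> nat set" where
  "validv v c = {i. i < v \<and> 1 \<le> c i \<and> partv v (c(i := c i - 1))}"

lemma size_upd: "i < v \<Longrightarrow> 1 \<le> c i \<Longrightarrow> sizev v c = Suc (sizev v (c(i := c i - 1)))"
proof -
  assume a: "i < v" "1 \<le> c i"
  have "sizev v c = c i + (\<Sum>j\<in>{..<v}-{i}. c j)" unfolding sizev_def using a by (simp add: sum.remove)
  moreover have "sizev v (c(i := c i - 1)) = (c i - 1) + (\<Sum>j\<in>{..<v}-{i}. c j)"
    unfolding sizev_def using a by (simp add: sum.remove)
  ultimately show ?thesis using a by simp
qed

lemma cells_upd: "i < v \<Longrightarrow> 1 \<le> c i \<Longrightarrow> cellsv v c = cellsv v (c(i := c i - 1)) \<union> {(i, c i - 1)}"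
  unfolding cellsv_def by (auto split: if_splits)

lemma extv_in:
  assumes i: "i \<in> validv v c" and p: "partv v c" and T: "T \<in> sytv v (c(i := c i - 1))"
  shows "extv v c i T \<in> sytv v c"
proof -
  let ?c = "c(i := c i - 1)"
  have iv: "i < v" and ci: "1 \<le> c i" and p': "partv v ?c" using i unfolding validv_def by auto
  define N where "N = sizev v c"
  have NS: "N = Suc (sizev v ?c)" using size_upd[of i v c, OF iv ci] N_def by simp
  have b: "bij_betw T (cellsv v ?c) {1..sizev v ?c}" and z: "\<forall>x. x \<notin> cellsv v ?c \<longrightarrow> T x = 0"
    and r: "\<forall>a j. a < v \<and> j + 1 < ?c a \<longrightarrow> T (a, j) < T (a, j + 1)"
    and cl: "\<forall>a j. a + 1 < v \<and> j < ?c (a + 1) \<longrightarrow> T (a, j) < T (a + 1, j)"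
    using T unfolding sytv_def by auto
  have nin: "(i, c i - 1) \<notin> cellsv v ?c" unfolding cellsv_def by auto
  have le: "\<And>x. x \<in> cellsv v ?c \<Longrightarrow> T x \<le> sizev v ?c" using bij_betw_apply[OF b] by auto
  have le': "\<And>x. T x < N"
  proof -
    fix x show "T x < N" using le[of x] z[rule_format, of x] NS by (cases "x \<in> cellsv v ?c") auto
  qed
  let ?T = "extv v c i T"
  have bij1: "bij_betw ?T (cellsv v ?c) {1..sizev v ?c}"
  proof -
    have "\<forall>x\<in>cellsv v ?c. ?T x = T x" using nin unfolding extv_def by auto
    then show ?thesis using b bij_betw_cong[of "cellsv v ?c" ?T T] by simp
  qed
  have "bij_betw ?T (cellsv v ?c \<union> {(i, c i - 1)}) ({1..sizev v ?c} \<union> {?T (i, c i - 1)})"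
    by (rule notIn_Un_bij_betw[OF nin _ bij1]) (simp add: extv_def N_def[symmetric] NS)
  moreover have "{1..sizev v ?c} \<union> {?T (i, c i - 1)} = {1..sizev v c}"
    using NS unfolding N_def by (auto simp: extv_def)
  ultimately have B: "bij_betw ?T (cellsv v c) {1..sizev v c}" using cells_upd[of i v c, OF iv ci] by simp
  have Z: "\<forall>x. x \<notin> cellsv v c \<longrightarrow> ?T x = 0"
    using z cells_upd[of i v c, OF iv ci] unfolding extv_def by auto
  have R: "\<forall>a j. a < v \<and> j + 1 < c a \<longrightarrow> ?T (a, j) < ?T (a, j + 1)"
  proof (intro allI impI)
    fix a j assume aj: "a < v \<and> j + 1 < c a"
    show "?T (a, j) < ?T (a, j + 1)"
    proof (cases "(a, j + 1) = (i, c i - 1)")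
      case True
      then have "(a, j) \<noteq> (i, c i - 1)" by auto
      then show ?thesis using True le' unfolding extv_def by (simp add: N_def[symmetric])
    next
      case False
      then have "(a, j) \<noteq> (i, c i - 1)" using aj by auto
      moreover have "j + 1 < ?c a" using aj False by auto
      ultimately show ?thesis using r aj False unfolding extv_def by auto
    qed
  qed
  have CL: "\<forall>a j. a + 1 < v \<and> j < c (a + 1) \<longrightarrow> ?T (a, j) < ?T (a + 1, j)"
  proof (intro allI impI)
    fix a j assume aj: "a + 1 < v \<and> j < c (a + 1)"
    show "?T (a, j) < ?T (a + 1, j)"
    proof (cases "(a + 1, j) = (i, c i - 1)")
      case True
      then have "(a, j) \<noteq> (i, c i - 1)" by auto
      then show ?thesis using True le' unfolding extv_def by (simp add: N_def[symmetric])
    next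
      case False
      have ne: "(a, j) \<noteq> (i, c i - 1)"
      proof
        assume "(a, j) = (i, c i - 1)"
        then have "a = i" "j = c i - 1" by auto
        moreover have "?c (Suc a) \<le> ?c a" using p' aj unfolding partv_def by auto
        ultimately show False using aj ci by auto
      qed
      moreover have "j < ?c (a + 1)" using aj False by auto
      ultimately show ?thesis using cl aj False unfolding extv_def by auto
    qed
  qed
  show ?thesis unfolding sytv_def using B Z R CL by blast
qed

lemma extv_val_other:
  assumes "i \<in> validv v c" "T \<in> sytv v (c(i := c i - 1))" "x \<noteq> (i, c i - 1)"
  shows "extv v c i T x < sizev v c"
proof -
  let ?c = "c(i := c i - 1)"
  have iv: "i < v" and ci: "1 \<le> c i" using assms(1) unfolding validv_def by auto
  have NS: "sizev v c = Suc (sizev v ?c)" using size_upd[of i v c, OF iv ci] by simp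
  have b: "bij_betw T (cellsv v ?c) {1..sizev v ?c}" and z: "\<forall>x. x \<notin> cellsv v ?c \<longrightarrow> T x = 0"
    using assms(2) unfolding sytv_def by auto
  have "T x < sizev v c" using bij_betw_apply[OF b, of x] z[rule_format, of x] NS by (cases "x \<in> cellsv v ?c") auto
  then show ?thesis using assms(3) unfolding extv_def by simp
qed

lemma card_rec:
  assumes p: "partv v c"
  shows "(\<Sum>i\<in>validv v c. card (sytv v (c(i := c i - 1)))) \<le> card (sytv v c)"
proof -
  have fv: "finite (validv v c)" unfolding validv_def by auto
  have inj: "inj_on (extv v c i) (sytv v (c(i := c i - 1)))" if i: "i \<in> validv v c" for i
  proof (rule inj_onI)
    fix T T' assume T: "T \<in> sytv v (c(i := c i - 1))" and T': "T' \<in> sytv v (c(i := c i - 1))"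
      and e: "extv v c i T = extv v c i T'"
    have n: "(i, c i - 1) \<notin> cellsv v (c(i := c i - 1))" unfolding cellsv_def by auto
    have "T (i, c i - 1) = 0" "T' (i, c i - 1) = 0" using T T' n unfolding sytv_def by auto
    then show "T = T'" using e unfolding extv_def by (metis fun_upd_triv fun_upd_upd)
  qed
  have disj: "extv v c i ` sytv v (c(i := c i - 1)) \<inter> extv v c j ` sytv v (c(j := c j - 1)) = {}"
    if "i \<in> validv v c" "j \<in> validv v c" "i \<noteq> j" for i j
  proof (rule ccontr)
    assume "\<not> ?thesis"
    then obtain T T' where T: "T \<in> sytv v (c(i := c i - 1))" and T': "T' \<in> sytv v (c(j := c j - 1))"
      and e: "extv v c i T = extv v c j T'" by blast
    have "extv v c i T (i, c i - 1) = sizev v c" unfolding extv_def by simp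
    moreover have "extv v c j T' (i, c i - 1) < sizev v c"
      using extv_val_other[OF that(2) T'] that(3) by auto
    ultimately show False using e by simp
  qed
  have "(\<Sum>i\<in>validv v c. card (sytv v (c(i := c i - 1)))) = (\<Sum>i\<in>validv v c. card (extv v c i ` sytv v (c(i := c i - 1))))"
    using inj by (intro sum.cong refl) (simp add: card_image)
  also have "\<dots> = card (\<Union>i\<in>validv v c. extv v c i ` sytv v (c(i := c i - 1)))"
    using fv disj by (intro card_UN_disjoint[symmetric]) (auto intro: finite_sytv)
  also have "\<dots> \<le> card (sytv v c)"
    using extv_in[OF _ p] by (intro card_mono finite_sytv) auto
  finally show ?thesis .
qed

definition xv :: "nat \<Rightarrow> (nat \<Rightarrow> nat) \<Rightarrow> nat \<Rightarrow> real" where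
  "xv v c i = real (c i) + real v - 1 - real i"
definition Lv :: "nat \<Rightarrow> (nat \<Rightarrow> nat) \<Rightarrow> nat \<Rightarrow> nat" where
  "Lv v c i = c i + v - 1 - i"
definition Fv :: "nat \<Rightarrow> (nat \<Rightarrow> nat) \<Rightarrow> real" where
  "Fv v c = fact (sizev v c) * Dv v (xv v c) / (\<Prod>i<v. fact (Lv v c i))"

lemma real_L: "i < v \<Longrightarrow> real (Lv v c i) = xv v c i"
  unfolding Lv_def xv_def by (simp add: of_nat_diff)

lemma xv_gap: "partv v c \<Longrightarrow> j < i \<Longrightarrow> i < v \<Longrightarrow> xv v c i + 1 \<le> xv v c j"
proof -
  assume a: "partv v c" "j < i" "i < v"
  have "c i \<le> c j" using part_mono[OF a(1) _ a(3), of j] a(2) by simp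
  then show ?thesis using a unfolding xv_def by simp
qed

lemma xv_inj: "partv v c \<Longrightarrow> inj_on (xv v c) {..<v}"
proof (rule inj_onI)
  fix a b assume p: "partv v c" and ab: "a \<in> {..<v}" "b \<in> {..<v}" "xv v c a = xv v c b"
  show "a = b"
  proof (rule ccontr)
    assume "a \<noteq> b"
    then consider "a < b" | "b < a" by linarith
    then show False using xv_gap[OF p] ab by (cases; fastforce)
  qed
qed

lemma prod_diff_fact: "(\<Prod>j<i. (real i - real j)) = fact i"
proof -
  have "(fact i :: real) = of_nat (\<Prod>j = 0..<i. i - j)" by (rule fact_prod_rev)
  also have "\<dots> = (\<Prod>j<i. real (i - j))" by (simp add: of_nat_prod atLeast0LessThan)
  also have "\<dots> = (\<Prod>j<i. (real i - real j))" by (intro prod.cong) (auto simp: of_nat_diff)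
  finally show ?thesis by simp
qed

lemma Dv_const: "Dv v (xv v (\<lambda>_. a)) = (\<Prod>i<v. fact i)"
proof -
  have "Dv v (xv v (\<lambda>_. a)) = (\<Prod>i<v. \<Prod>j<i. (real i - real j))"
    unfolding Dv_def xv_def by (intro prod.cong refl) (simp add: algebra_simps)
  then show ?thesis by (simp add: prod_diff_fact)
qed

lemma prod_fact_rev: "(\<Prod>i<v. (fact (a + v - 1 - i) :: real)) = (\<Prod>i<v. fact (a + i))"
proof -
  have "(\<Prod>i<v. (fact (a + v - 1 - i) :: real)) = (\<Prod>i<v. (\<lambda>k. fact (a + k)) (v - Suc i))"
    by (intro prod.cong refl) (simp add: Suc_diff_Suc diff_Suc_1 del: fact_Suc)
  also have "\<dots> = (\<Prod>i<v. fact (a + i))" by (rule prod.nat_diff_reindex)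
  finally show ?thesis .
qed

lemma Fv_const: "Fv v (\<lambda>_. a) = fact (a * v) * (\<Prod>i<v. fact i) / (\<Prod>i<v. fact (a + i))"
proof -
  have s: "sizev v (\<lambda>_. a) = a * v" unfolding sizev_def by simp
  have "(\<Prod>i<v. (fact (Lv v (\<lambda>_. a) i) :: real)) = (\<Prod>i<v. fact (a + v - 1 - i))"
    unfolding Lv_def by simp
  then show ?thesis unfolding Fv_def s Dv_const prod_fact_rev by simp
qed

lemma Fv_cong: "(\<And>i. i < v \<Longrightarrow> c i = d i) \<Longrightarrow> Fv v c = Fv v d"
proof -
  assume e: "\<And>i. i < v \<Longrightarrow> c i = d i"
  have "sizev v c = sizev v d" unfolding sizev_def using e by simp
  moreover have "Dv v (xv v c) = Dv v (xv v d)" by (rule Dv_cong) (simp add: xv_def e)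
  moreover have "(\<Prod>i<v. (fact (Lv v c i)::real)) = (\<Prod>i<v. fact (Lv v d i))"
    by (intro prod.cong) (auto simp: Lv_def e)
  ultimately show ?thesis unfolding Fv_def by simp
qed

lemma Fv_zero: "(\<And>i. i < v \<Longrightarrow> c i = 0) \<Longrightarrow> Fv v c = 1"
proof -
  assume "\<And>i. i < v \<Longrightarrow> c i = 0"
  then have "Fv v c = Fv v (\<lambda>_. 0)" by (intro Fv_cong) auto
  also have "\<dots> = 1" unfolding Fv_const by simp
  finally show ?thesis .
qed

lemma Fv_step:
  assumes p: "partv v c" and i: "i \<in> validv v c"
  shows "Fv v (c(i := c i - 1)) = Fv v c * xv v c i * wt v (xv v c) i / real (sizev v c)"
proof -
  let ?c = "c(i := c i - 1)"
  define x where "x = xv v c"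
  have iv: "i < v" and ci: "1 \<le> c i" using i unfolding validv_def by auto
  have NS: "sizev v c = Suc (sizev v ?c)" using size_upd[of i v c, OF iv ci] by simp
  have inj: "inj_on x {..<v}" unfolding x_def by (rule xv_inj[OF p])
  have D1: "Dv v (xv v ?c) = Dv v (x(i := x i - 1))"
    by (rule Dv_cong) (use ci in \<open>auto simp: xv_def x_def of_nat_diff\<close>)
  define P where "P = (\<Prod>j\<in>{..<v}-{i}. (x i - x j))"
  define R where "R = (\<Prod>j\<in>{..<v}-{i}. (x i - 1 - x j))"
  have Pnz: "P \<noteq> 0"
    using inj iv unfolding P_def inj_on_def by (auto simp: prod_zero_iff)
  have wtRP: "wt v x i = R / P"
    unfolding wt_def R_def P_def prod_dividef[symmetric] by (intro prod.cong refl) (simp add: algebra_simps)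
  have D2: "Dv v (xv v ?c) = Dv v x * wt v x i"
    using D_upd[OF iv, of x] Pnz unfolding D1 wtRP P_def[symmetric] R_def[symmetric]
    by (simp add: field_simps)
  have Li: "1 \<le> Lv v c i" unfolding Lv_def using ci iv by simp
  have Li': "Lv v ?c i = Lv v c i - 1" unfolding Lv_def using ci by simp
  define Q where "Q = (\<Prod>j\<in>{..<v}-{i}. (fact (Lv v c j) :: real))"
  have Q': "(\<Prod>j\<in>{..<v}-{i}. (fact (Lv v ?c j) :: real)) = Q"
    unfolding Q_def by (intro prod.cong refl) (auto simp: Lv_def)
  have F1: "(\<Prod>j<v. (fact (Lv v ?c j) :: real)) = fact (Lv v c i - 1) * Q"
  proof -
    have "(\<Prod>j<v. (fact (Lv v ?c j) :: real)) = fact (Lv v ?c i) * (\<Prod>j\<in>{..<v}-{i}. (fact (Lv v ?c j) :: real))"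
      using iv by (intro prod.remove) auto
    then show ?thesis unfolding Q' Li' .
  qed
  have F2: "(\<Prod>j<v. (fact (Lv v c j) :: real)) = real (Lv v c i) * fact (Lv v c i - 1) * Q"
  proof -
    have "(\<Prod>j<v. (fact (Lv v c j) :: real)) = fact (Lv v c i) * Q"
      using iv by (simp add: prod.remove Q_def)
    moreover have "(fact (Lv v c i) :: real) = real (Lv v c i) * fact (Lv v c i - 1)"
      using Li by (cases "Lv v c i") auto
    ultimately show ?thesis by simp
  qed
  have fN: "(fact (sizev v c) :: real) = real (sizev v c) * fact (sizev v ?c)"
    unfolding NS by simp
  have Qnz: "Q \<noteq> 0" unfolding Q_def by simp
  have Lr: "real (Lv v c i) = x i" unfolding x_def using real_L[OF iv] .
  have Npos: "real (sizev v c) \<noteq> 0" using NS by simp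
  have fnz: "(fact (Lv v c i - 1) :: real) \<noteq> 0" by simp
  have lnz: "x i \<noteq> 0" using Li Lr by auto
  have aux: "\<And>fm d w f q N l :: real. q \<noteq> 0 \<Longrightarrow> N \<noteq> 0 \<Longrightarrow> f \<noteq> 0 \<Longrightarrow> l \<noteq> 0 \<Longrightarrow>
      fm * (d * w) / (f * q) = N * fm * d / (l * f * q) * l * w / N"
    by (simp add: field_simps)
  show ?thesis
    unfolding Fv_def D2 F1 F2 fN Lr x_def[symmetric]
    by (rule aux[OF Qnz Npos fnz lnz])
qed

lemma wt_zero:
  assumes "Suc i < v" "x (Suc i) = x i - 1"
  shows "wt v x i = 0"
  unfolding wt_def using assms by (intro prod_zero) (auto intro!: bexI[of _ "Suc i"])

lemma invalid_zero:
  assumes p: "partv v c" and iv: "i < v" and ni: "i \<notin> validv v c"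
  shows "xv v c i * wt v (xv v c) i = 0"
proof -
  have eqz: "wt v (xv v c) i = 0" if "Suc i < v" "c (Suc i) = c i"
    by (rule wt_zero) (use that in \<open>auto simp: xv_def\<close>)
  show ?thesis
  proof (cases "c i = 0")
    case True
    show ?thesis
    proof (cases "Suc i < v")
      case True
      then have "c (Suc i) \<le> c i" using p unfolding partv_def by auto
      then show ?thesis using eqz[OF True] \<open>c i = 0\<close> by simp
    next
      case False
      then have "i = v - 1" using iv by simp
      then show ?thesis using \<open>c i = 0\<close> iv by (simp add: xv_def of_nat_diff)
    qed
  next
    case False
    then have np: "\<not> partv v (c(i := c i - 1))" using ni iv unfolding validv_def by auto
    then obtain k where k: "Suc k < v" "\<not> (c(i := c i - 1)) (Suc k) \<le> (c(i := c i - 1)) k"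
      unfolding partv_def by auto
    have pk: "c (Suc k) \<le> c k" using p k(1) unfolding partv_def by auto
    have "k = i"
    proof (rule ccontr)
      assume "k \<noteq> i"
      then show False
      proof (cases "Suc k = i")
        case True
        then show False using k pk \<open>k \<noteq> i\<close> by auto
      next
        case False
        then show False using k pk \<open>k \<noteq> i\<close> by auto
      qed
    qed
    then have "c (Suc i) = c i" using k pk by auto
    then show ?thesis using eqz k(1) \<open>k = i\<close> by simp
  qed
qed

lemma sum_idx: "(\<Sum>i<v. real i) = real v * (real v - 1) / 2"
  by (induction v) (auto simp: field_simps)

lemma sum_x: "(\<Sum>i<v. xv v c i) = real (sizev v c) + real v * (real v - 1) / 2"
proof -
  have "(\<Sum>i<v. xv v c i) = (\<Sum>i<v. real (c i)) + real v * (real v - 1) - (\<Sum>i<v. real i)"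
    unfolding xv_def by (simp add: sum.distrib sum_subtractf algebra_simps)
  then show ?thesis unfolding sum_idx sizev_def by (simp add: field_simps)
qed

lemma Fv_rec:
  assumes p: "partv v c" and N: "1 \<le> sizev v c"
  shows "(\<Sum>i\<in>validv v c. Fv v (c(i := c i - 1))) = Fv v c"
proof -
  let ?x = "xv v c"
  have sub: "validv v c \<subseteq> {..<v}" unfolding validv_def by auto
  have "(\<Sum>i\<in>validv v c. Fv v (c(i := c i - 1))) = (\<Sum>i\<in>validv v c. Fv v c / real (sizev v c) * (?x i * wt v ?x i))"
    using Fv_step[OF p] by (intro sum.cong refl) (simp add: field_simps)
  also have "\<dots> = Fv v c / real (sizev v c) * (\<Sum>i\<in>validv v c. ?x i * wt v ?x i)"
    by (simp add: sum_distrib_left)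
  also have "(\<Sum>i\<in>validv v c. ?x i * wt v ?x i) = (\<Sum>i<v. ?x i * wt v ?x i)"
    using invalid_zero[OF p] sub by (intro sum.mono_neutral_left) auto
  also have "\<dots> = real (sizev v c)"
    using WT[OF xv_inj[OF p]] sum_x[of v c] by simp
  also have "Fv v c / real (sizev v c) * real (sizev v c) = Fv v c" using N by simp
  finally show ?thesis .
qed

lemma Fv_le_card: "partv v c \<Longrightarrow> Fv v c \<le> real (card (sytv v c))"
proof (induction "sizev v c" arbitrary: c)
  case 0
  then have z: "\<And>i. i < v \<Longrightarrow> c i = 0" unfolding sizev_def by simp
  have ce: "cellsv v c = {}" using z unfolding cellsv_def by auto
  have "(\<lambda>_. 0) \<in> sytv v c"
    unfolding sytv_def ce using z \<open>0 = sizev v c\<close>[symmetric] by (auto simp: bij_betw_def)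
  then have "card (sytv v c) \<ge> 1" using finite_sytv by (metis One_nat_def Suc_leI card_gt_0_iff empty_iff)
  then show ?case using Fv_zero[OF z] by simp
next
  case (Suc m)
  have IH: "Fv v (c(i := c i - 1)) \<le> real (card (sytv v (c(i := c i - 1))))" if "i \<in> validv v c" for i
  proof -
    have iv: "i < v" and ci: "1 \<le> c i" and p': "partv v (c(i := c i - 1))" using that unfolding validv_def by auto
    have "m = sizev v (c(i := c i - 1))" using size_upd[of i v c, OF iv ci] Suc.hyps(2) by simp
    then show ?thesis using Suc.hyps(1) p' by blast
  qed
  have "Fv v c = (\<Sum>i\<in>validv v c. Fv v (c(i := c i - 1)))"
    using Fv_rec[OF Suc.prems] Suc.hyps(2) by simp
  also have "\<dots> \<le> (\<Sum>i\<in>validv v c. real (card (sytv v (c(i := c i - 1)))))"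
    by (intro sum_mono IH)
  also have "\<dots> \<le> real (card (sytv v c))"
    using card_rec[OF Suc.prems] by (simp flip: of_nat_sum)
  finally show ?case .
qed

lemma rect_eq: "rect_syt u v = sytv v (\<lambda>_. u)"
proof -
  have c: "cellsv v (\<lambda>_. u) = rect_cells u v" unfolding cellsv_def rect_cells_def by simp
  have s: "sizev v (\<lambda>_. u) = u * v" unfolding sizev_def by simp
  show ?thesis unfolding rect_syt_def sytv_def c s by simp
qed

lemma fact_split: "(fact (u + i) :: real) = fact i * (\<Prod>j<u. real (i + j + 1))"
  by (induction u) (auto simp: algebra_simps)

lemma am2: fixes a b :: real shows "a * b \<le> ((a + b) / 2) ^ 2"
proof -
  have "((a + b) / 2) ^ 2 - a * b = ((a - b) / 2) ^ 2" by (simp add: power2_eq_square field_simps)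
  moreover have "0 \<le> ((a - b) / 2) ^ 2" by simp
  ultimately show ?thesis by linarith
qed

definition Hk :: "nat \<Rightarrow> nat \<Rightarrow> real" where
  "Hk u v = (\<Prod>i<v. \<Prod>j<u. real (i + j + 1))"

lemma Hk_pos: "0 < Hk u v" unfolding Hk_def by (intro prod_pos) auto

lemma Fv_rect: "Fv v (\<lambda>_. u) = fact (u * v) / Hk u v"
proof -
  have "(\<Prod>i<v. (fact (u + i) :: real)) = (\<Prod>i<v. fact i) * Hk u v"
    unfolding Hk_def fact_split prod.distrib ..
  moreover have "(\<Prod>i<v. (fact i :: real)) \<noteq> 0" by simp
  ultimately show ?thesis unfolding Fv_const by simp
qed

lemma Hk_le: "Hk u v \<le> ((real u + real v) / 2) ^ (u * v)"
proof -
  define M where "M = (real u + real v) / 2"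
  define h where "h i j = real (i + j + 1)" for i j
  have r: "Hk u v = (\<Prod>i<v. \<Prod>j<u. h (v - Suc i) (u - Suc j))"
  proof -
    have "Hk u v = (\<Prod>i<v. \<Prod>j<u. h i j)" unfolding Hk_def h_def by simp
    also have "\<dots> = (\<Prod>i<v. \<Prod>j<u. h i (u - Suc j))"
      by (simp only: prod.nat_diff_reindex)
    also have "\<dots> = (\<Prod>i<v. (\<lambda>i. \<Prod>j<u. h i (u - Suc j)) (v - Suc i))"
      by (rule prod.nat_diff_reindex[symmetric])
    finally show ?thesis by simp
  qed
  have "Hk u v * Hk u v = (\<Prod>i<v. \<Prod>j<u. h i j * h (v - Suc i) (u - Suc j))"
    by (subst (2) r) (simp add: Hk_def h_def prod.distrib)
  also have "\<dots> \<le> (\<Prod>i<v. \<Prod>j<u. M ^ 2)"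
  proof (intro prod_mono conjI)
    fix i j assume "i \<in> {..<v}" "j \<in> {..<u}"
    then have s: "h i j + h (v - Suc i) (u - Suc j) = 2 * M"
      unfolding h_def M_def by (simp add: of_nat_diff)
    have "M = (h i j + h (v - Suc i) (u - Suc j)) / 2" using s by simp
    then show "h i j * h (v - Suc i) (u - Suc j) \<le> M ^ 2" using am2[of "h i j" "h (v - Suc i) (u - Suc j)"] by (simp only:)
    show "0 \<le> h i j * h (v - Suc i) (u - Suc j)" unfolding h_def by simp
  qed (auto intro!: prod_nonneg simp: h_def)
  also have "\<dots> = M ^ (u * v) * M ^ (u * v)"
    by (simp add: power_mult[symmetric] power_add[symmetric] mult_2_right algebra_simps)
  finally have "(Hk u v)^2 \<le> (M ^ (u * v))^2" by (simp add: power2_eq_square)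
  moreover have "0 \<le> M ^ (u * v)" unfolding M_def by simp
  ultimately show ?thesis unfolding M_def[symmetric] by (rule power2_le_imp_le)
qed

lemma exp_fact: "1 \<le> n \<Longrightarrow> real n ^ n / fact n < exp (real n)"
proof -
  assume n: "1 \<le> n"
  define f where "f k = real n ^ k / fact k" for k
  have sm: "f sums exp (real n)" using exp_converges[of "real n"] unfolding f_def
    by (simp add: divide_inverse_commute scaleR_conv_of_real)
  have "(\<Sum>k<Suc n. f k) \<le> exp (real n)"
    using sum_le_suminf[OF sums_summable[OF sm], of "{..<Suc n}"] sums_unique[OF sm]
    by (simp add: f_def)
  moreover have "(\<Sum>k<Suc n. f k) = f n + (\<Sum>k<n. f k)" by simp
  moreover have "f 0 \<le> (\<Sum>k<n. f k)" using n by (intro member_le_sum) (auto simp: f_def)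
  ultimately show ?thesis by (simp add: f_def)
qed

theorem lemma3p12:
  fixes u v n :: nat
  assumes "0 < u" and "0 < v" and "n = u * v"
  shows "(real n / real (u + v)) ^ n * (2 / exp 1) ^ n < real (num_syt_rect u v)
         \<and> (\<forall>\<alpha>::real. 0 \<le> \<alpha> \<and> \<alpha> \<le> real n / real (u + v) * (2 / exp 1)
               \<longrightarrow> \<alpha> ^ n \<le> real (num_syt_rect u v))"
proof -
  define M where "M = (real u + real v) / 2"
  have Mpos: "0 < M" using assms unfolding M_def by simp
  have n1: "1 \<le> n" using assms by (simp add: Suc_le_eq)
  have p: "partv v (\<lambda>_. u)" unfolding partv_def by simp
  have s1: "fact n / Hk u v \<le> real (num_syt_rect u v)"
    using Fv_le_card[OF p] unfolding num_syt_rect_def rect_eq Fv_rect assms(3) .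
  have s2: "fact n / M ^ n \<le> fact n / Hk u v"
    using Hk_le[of u v] Hk_pos[of u v] unfolding M_def[symmetric] assms(3)[symmetric]
    by (intro divide_left_mono) auto
  have ef: "real n ^ n < fact n * exp (real n)"
    using exp_fact[OF n1] by (simp add: divide_less_eq mult.commute)
  have en: "exp (real n) = exp 1 ^ n" using exp_of_nat_mult[of n 1] by simp
  have b: "(real n / real (u + v)) ^ n * (2 / exp 1) ^ n = (real n / exp 1) ^ n / M ^ n"
    unfolding M_def by (simp add: power_divide power_mult_distrib field_simps)
  have s3: "(real n / exp 1) ^ n / M ^ n < fact n / M ^ n"
  proof -
    have "(real n / exp 1) ^ n < fact n"
      using ef en by (simp add: power_divide divide_less_eq)
    then show ?thesis using Mpos by (intro divide_strict_right_mono) auto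
  qed
  have main: "(real n / real (u + v)) ^ n * (2 / exp 1) ^ n < real (num_syt_rect u v)"
    using b s1 s2 s3 by linarith
  moreover have "\<forall>\<alpha>::real. 0 \<le> \<alpha> \<and> \<alpha> \<le> real n / real (u + v) * (2 / exp 1)
               \<longrightarrow> \<alpha> ^ n \<le> real (num_syt_rect u v)"
  proof (intro allI impI)
    fix \<alpha> :: real assume a: "0 \<le> \<alpha> \<and> \<alpha> \<le> real n / real (u + v) * (2 / exp 1)"
    then have "\<alpha> ^ n \<le> (real n / real (u + v) * (2 / exp 1)) ^ n" by (intro power_mono) auto
    moreover have "(real n / real (u + v) * (2 / exp 1)) ^ n = (real n / real (u + v)) ^ n * (2 / exp 1) ^ n"
      by (rule power_mult_distrib)
    ultimately show "\<alpha> ^ n \<le> real (num_syt_rect u v)" using main by linarith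
  qed
  ultimately show ?thesis by blast
qed

end
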